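(* Let $\mathfrak A$ be a properly infinite von Neumann algebra acting on a Hilbert space $\mathcal H$. Then $\mathfrak A$ is neither $*$-clean nor strongly clean.
   Context: A $*$-ring is $*$-clean if every element is the sum of an invertible element and a projection ($P=P^*=P^2$). A unital ring is strongly clean if every element $T$ can be written as $U+P$ with $U$ invertible, $P$ idempotent and $PT=TP$. *)

theory Defs
  imports "HOL-Analysis.Analysis"
begin

text \<open>Concrete model of a complex Hilbert space: \<open>\<ell>\<^sup>2('i)\<close>, the square-summable
  complex functions on an arbitrary index type \<open>'i\<close> (every nonzero Hilbert space is
  unitarily isomorphic to one of these, via an orthonormal basis).\<close>

definition l2 :: "('i \<Rightarrow> complex) set" where
  "l2 = {x. (\<lambda>i. (cmod (x i))^2) summable_on UNIV}"

definition l2_inner :: "('i \<Rightarrow> complex) \<Rightarrow> ('i \<Rightarrow> complex) \<Rightarrow> complex" where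
  "l2_inner x y = (\<Sum>\<^sub>\<infinity>i. cnj (x i) * y i)"

definition l2_norm :: "('i \<Rightarrow> complex) \<Rightarrow> real" where
  "l2_norm x = sqrt (\<Sum>\<^sub>\<infinity>i. (cmod (x i))^2)"

text \<open>Bounded linear operators on \<open>\<ell>\<^sup>2\<close>; represented as functions that are
  normalised to be 0 outside \<open>\<ell>\<^sup>2\<close>, so that equality of operators is equality of functions.\<close>

definition bops :: "(('i \<Rightarrow> complex) \<Rightarrow> ('i \<Rightarrow> complex)) set" where
  "bops = {T. (\<forall>x\<in>l2. T x \<in> l2)
            \<and> (\<forall>x\<in>l2. \<forall>y\<in>l2. \<forall>c. T (\<lambda>i. x i + c * y i) = (\<lambda>i. T x i + c * T y i))
            \<and> (\<exists>K. \<forall>x\<in>l2. l2_norm (T x) \<le> K * l2_norm x)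
            \<and> (\<forall>x. x \<notin> l2 \<longrightarrow> T x = (\<lambda>i. 0))}"

definition bid :: "('i \<Rightarrow> complex) \<Rightarrow> ('i \<Rightarrow> complex)" where
  "bid = (\<lambda>x. if x \<in> l2 then x else (\<lambda>i. 0))"

definition bzero :: "('i \<Rightarrow> complex) \<Rightarrow> ('i \<Rightarrow> complex)" where
  "bzero = (\<lambda>x i. 0)"

definition badd :: "(('i \<Rightarrow> complex) \<Rightarrow> ('i \<Rightarrow> complex)) \<Rightarrow> (('i \<Rightarrow> complex) \<Rightarrow> ('i \<Rightarrow> complex))
                    \<Rightarrow> ('i \<Rightarrow> complex) \<Rightarrow> ('i \<Rightarrow> complex)" where
  "badd S T = (\<lambda>x i. S x i + T x i)"

definition bscale :: "complex \<Rightarrow> (('i \<Rightarrow> complex) \<Rightarrow> ('i \<Rightarrow> complex)) \<Rightarrow> ('i \<Rightarrow> complex) \<Rightarrow> ('i \<Rightarrow> complex)" where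
  "bscale c T = (\<lambda>x i. c * T x i)"

definition is_adjoint :: "(('i \<Rightarrow> complex) \<Rightarrow> ('i \<Rightarrow> complex)) \<Rightarrow> (('i \<Rightarrow> complex) \<Rightarrow> ('i \<Rightarrow> complex)) \<Rightarrow> bool" where
  "is_adjoint T S \<longleftrightarrow> S \<in> bops \<and> (\<forall>x\<in>l2. \<forall>y\<in>l2. l2_inner (T x) y = l2_inner x (S y))"

definition adj :: "(('i \<Rightarrow> complex) \<Rightarrow> ('i \<Rightarrow> complex)) \<Rightarrow> ('i \<Rightarrow> complex) \<Rightarrow> ('i \<Rightarrow> complex)" where
  "adj T = (SOME S. is_adjoint T S)"

definition commutant :: "(('i \<Rightarrow> complex) \<Rightarrow> ('i \<Rightarrow> complex)) set \<Rightarrow> (('i \<Rightarrow> complex) \<Rightarrow> ('i \<Rightarrow> complex)) set" where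
  "commutant S = {T \<in> bops. \<forall>A\<in>S. T \<circ> A = A \<circ> T}"

definition von_neumann_algebra :: "(('i \<Rightarrow> complex) \<Rightarrow> ('i \<Rightarrow> complex)) set \<Rightarrow> bool" where
  "von_neumann_algebra M \<longleftrightarrow>
     M \<subseteq> bops \<and> bid \<in> M
     \<and> (\<forall>S\<in>M. \<forall>T\<in>M. badd S T \<in> M \<and> S \<circ> T \<in> M)
     \<and> (\<forall>c. \<forall>T\<in>M. bscale c T \<in> M)
     \<and> (\<forall>T\<in>M. adj T \<in> M)
     \<and> commutant (commutant M) = M"

definition is_proj :: "(('i \<Rightarrow> complex) \<Rightarrow> ('i \<Rightarrow> complex)) set \<Rightarrow> (('i \<Rightarrow> complex) \<Rightarrow> ('i \<Rightarrow> complex)) \<Rightarrow> bool" where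
  "is_proj M P \<longleftrightarrow> P \<in> M \<and> P \<circ> P = P \<and> adj P = P"

definition mvn_equiv :: "(('i \<Rightarrow> complex) \<Rightarrow> ('i \<Rightarrow> complex)) set \<Rightarrow> (('i \<Rightarrow> complex) \<Rightarrow> ('i \<Rightarrow> complex))
                         \<Rightarrow> (('i \<Rightarrow> complex) \<Rightarrow> ('i \<Rightarrow> complex)) \<Rightarrow> bool" where
  "mvn_equiv M P Q \<longleftrightarrow> (\<exists>V\<in>M. adj V \<circ> V = P \<and> V \<circ> adj V = Q)"

text \<open>\<open>P\<close> is infinite in \<open>M\<close>: equivalent to a proper subprojection (\<open>Q \<le> P\<close> iff \<open>Q P = Q\<close>).\<close>

definition infinite_proj :: "(('i \<Rightarrow> complex) \<Rightarrow> ('i \<Rightarrow> complex)) set \<Rightarrow> (('i \<Rightarrow> complex) \<Rightarrow> ('i \<Rightarrow> complex)) \<Rightarrow> bool" where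
  "infinite_proj M P \<longleftrightarrow> (\<exists>Q. is_proj M Q \<and> Q \<circ> P = Q \<and> Q \<noteq> P \<and> mvn_equiv M P Q)"

definition central_proj :: "(('i \<Rightarrow> complex) \<Rightarrow> ('i \<Rightarrow> complex)) set \<Rightarrow> (('i \<Rightarrow> complex) \<Rightarrow> ('i \<Rightarrow> complex)) \<Rightarrow> bool" where
  "central_proj M Z \<longleftrightarrow> is_proj M Z \<and> (\<forall>A\<in>M. Z \<circ> A = A \<circ> Z)"

text \<open>Properly infinite (Kadison--Ringrose 6.3.1): the identity is infinite and
  for every central projection \<open>Z\<close>, \<open>Z\<close> (= \<open>Z\<cdot>1\<close>) is either 0 or infinite.\<close>

definition properly_infinite :: "(('i \<Rightarrow> complex) \<Rightarrow> ('i \<Rightarrow> complex)) set \<Rightarrow> bool" where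
  "properly_infinite M \<longleftrightarrow> infinite_proj M bid
     \<and> (\<forall>Z. central_proj M Z \<longrightarrow> Z = bzero \<or> infinite_proj M Z)"

definition invertible_in :: "(('i \<Rightarrow> complex) \<Rightarrow> ('i \<Rightarrow> complex)) set \<Rightarrow> (('i \<Rightarrow> complex) \<Rightarrow> ('i \<Rightarrow> complex)) \<Rightarrow> bool" where
  "invertible_in M U \<longleftrightarrow> U \<in> M \<and> (\<exists>V\<in>M. U \<circ> V = bid \<and> V \<circ> U = bid)"

definition star_clean :: "(('i \<Rightarrow> complex) \<Rightarrow> ('i \<Rightarrow> complex)) set \<Rightarrow> bool" where
  "star_clean M \<longleftrightarrow> (\<forall>T\<in>M. \<exists>U P. invertible_in M U \<and> is_proj M P \<and> T = badd U P)"

definition strongly_clean :: "(('i \<Rightarrow> complex) \<Rightarrow> ('i \<Rightarrow> complex)) set \<Rightarrow> bool" where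
  "strongly_clean M \<longleftrightarrow> (\<forall>T\<in>M. \<exists>U P. invertible_in M U \<and> P \<in> M \<and> P \<circ> P = P
                                        \<and> P \<circ> T = T \<circ> P \<and> T = badd U P)"

end

theory Submission
  imports Defs
begin


lemma l2_iff: "x \<in> l2 \<longleftrightarrow> (\<lambda>i. (cmod (x i))^2) summable_on UNIV"
  by (simp add: l2_def)

lemma l2_zero[simp]: "(\<lambda>i. 0) \<in> l2"
  by (simp add: l2_def)

lemma l2_comb:
  assumes "x \<in> l2" "y \<in> l2"
  shows "(\<lambda>i. x i + c * y i) \<in> l2"
proof -
  have sx: "(\<lambda>i. 2 * (cmod (x i))^2 + 2 * (cmod c)^2 * (cmod (y i))^2) summable_on UNIV"
    using assms by (intro summable_on_add summable_on_cmult_right) (auto simp: l2_def)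
  have "(cmod (x i + c * y i))^2 \<le> 2 * (cmod (x i))^2 + 2 * (cmod c)^2 * (cmod (y i))^2" for i
  proof -
    have "cmod (x i + c * y i) \<le> cmod (x i) + cmod c * cmod (y i)"
      by (metis norm_mult norm_triangle_ineq)
    hence "(cmod (x i + c * y i))^2 \<le> (cmod (x i) + cmod c * cmod (y i))^2"
      by (simp add: power_mono)
    also have "\<dots> \<le> 2 * (cmod (x i))^2 + 2 * (cmod c)^2 * (cmod (y i))^2"
    proof -
      have "0 \<le> (cmod (x i) - cmod c * cmod (y i))^2" by simp
      thus ?thesis by (simp add: power2_eq_square algebra_simps)
    qed
    finally show ?thesis .
  qed
  thus ?thesis using sx
    by (auto simp: l2_def intro!: summable_on_comparison_test[OF sx])
qed



lemma t1: "cmod (x::complex) * cmod y \<le> (cmod x)^2 + (cmod y)^2"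
proof -
  have "0 \<le> (cmod x - cmod y)^2" by simp
  hence "2 * (cmod x * cmod y) \<le> (cmod x)^2 + (cmod y)^2" by (simp add: power2_diff)
  moreover have "0 \<le> cmod x * cmod y" by simp
  ultimately show ?thesis by linarith
qed

lemma inner_abs_summ:
  assumes "x \<in> l2" "y \<in> l2"
  shows "(\<lambda>i. norm (cnj (x i) * y i)) summable_on UNIV"
proof -
  have g: "(\<lambda>i. (cmod (x i))^2 + (cmod (y i))^2) summable_on UNIV"
    using assms unfolding l2_def by (intro summable_on_add) auto
  show ?thesis
  proof (rule summable_on_comparison_test[OF g])
    fix i
    show "norm (cnj (x i) * y i) \<le> (cmod (x i))^2 + (cmod (y i))^2"
      using t1[of "x i" "y i"] by (simp add: norm_mult)
    show "0 \<le> norm (cnj (x i) * y i)" by simp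
  qed
qed

lemma inner_summ:
  assumes "x \<in> l2" "y \<in> l2"
  shows "(\<lambda>i. cnj (x i) * y i) summable_on UNIV"
  by (rule abs_summable_summable) (rule inner_abs_summ[OF assms])

lemma inner_lin_right:
  assumes "x \<in> l2" "y \<in> l2" "z \<in> l2"
  shows "l2_inner x (\<lambda>i. y i + c * z i) = l2_inner x y + c * l2_inner x z"
proof -
  have "l2_inner x (\<lambda>i. y i + c * z i) = infsum (\<lambda>i. cnj (x i) * y i + c * (cnj (x i) * z i)) UNIV"
    unfolding l2_inner_def by (simp add: algebra_simps)
  also have "\<dots> = infsum (\<lambda>i. cnj (x i) * y i) UNIV + infsum (\<lambda>i. c * (cnj (x i) * z i)) UNIV"
    using assms by (intro infsum_add summable_on_cmult_right inner_summ)
  also have "\<dots> = l2_inner x y + c * l2_inner x z"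
    unfolding l2_inner_def using assms by (subst infsum_cmult_right) (auto intro: inner_summ)
  finally show ?thesis .
qed

lemma inner_conj: "l2_inner y x = cnj (l2_inner x y)"
proof -
  have "cnj (l2_inner x y) = infsum (\<lambda>i. cnj (cnj (x i) * y i)) UNIV"
    unfolding l2_inner_def by (rule infsum_cnj[symmetric])
  thus ?thesis unfolding l2_inner_def by (simp add: mult.commute)
qed

lemma inner_lin_left:
  assumes "x \<in> l2" "y \<in> l2" "z \<in> l2"
  shows "l2_inner (\<lambda>i. y i + c * z i) x = l2_inner y x + cnj c * l2_inner z x"
proof -
  have "l2_inner (\<lambda>i. y i + c * z i) x = cnj (l2_inner x (\<lambda>i. y i + c * z i))"
    by (rule inner_conj)
  also have "\<dots> = cnj (l2_inner x y + c * l2_inner x z)"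
    by (simp only: inner_lin_right[OF assms])
  also have "\<dots> = cnj (l2_inner x y) + cnj c * cnj (l2_inner x z)"
    by simp
  also have "\<dots> = l2_inner y x + cnj c * l2_inner z x"
    using inner_conj[of x y] inner_conj[of x z] by simp
  finally show ?thesis .
qed

lemma inner_zero_right[simp]: "l2_inner x (\<lambda>i. 0) = 0"
  by (simp add: l2_inner_def)

lemma inner_zero_left[simp]: "l2_inner (\<lambda>i. 0) x = 0"
  by (simp add: l2_inner_def)

lemma norm_sq_summ: "x \<in> l2 \<Longrightarrow> (\<lambda>i. (cmod (x i))^2) summable_on UNIV"
  by (simp add: l2_def)

lemma nsq_nonneg: "0 \<le> infsum (\<lambda>i. (cmod (x i))^2) UNIV"
  by (rule Infinite_Sum.infsum_nonneg, rule zero_le_power2)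

lemma l2_norm_nonneg: "0 \<le> l2_norm x"
  unfolding l2_norm_def using nsq_nonneg by simp

lemma l2_norm_sq: "(l2_norm x)^2 = infsum (\<lambda>i. (cmod (x i))^2) UNIV"
  unfolding l2_norm_def using nsq_nonneg by simp

lemma inner_self:
  assumes "x \<in> l2"
  shows "l2_inner x x = complex_of_real ((l2_norm x)^2)"
proof -
  have "l2_inner x x = infsum (\<lambda>i. complex_of_real ((cmod (x i))^2)) UNIV"
    unfolding l2_inner_def by (metis complex_norm_square mult.commute)
  also have "\<dots> = complex_of_real (infsum (\<lambda>i. (cmod (x i))^2) UNIV)"
    by (rule infsumI, rule has_sum_of_real, rule has_sum_infsum, rule norm_sq_summ[OF assms])
  finally show ?thesis by (simp add: l2_norm_sq)
qed

lemma l2_norm_zero: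
  assumes "x \<in> l2" "l2_norm x = 0"
  shows "x = (\<lambda>i. 0)"
proof
  fix i
  have "infsum (\<lambda>i. (cmod (x i))^2) UNIV \<le> 0" using assms(2) l2_norm_sq[of x] by simp
  hence "(cmod (x i))^2 = 0"
    by (rule nonneg_infsum_le_0D) (use assms in \<open>auto simp: l2_def\<close>)
  thus "x i = 0" by simp
qed

lemma l2_norm_zero_fun[simp]: "l2_norm (\<lambda>i. 0) = 0"
  by (simp add: l2_norm_def)

lemma summ2:
  fixes f g :: "'a \<Rightarrow> real"
  assumes "f summable_on UNIV" "g summable_on UNIV"
  shows "(\<lambda>i. c1 * f i + c2 * g i) summable_on UNIV"
    and "infsum (\<lambda>i. c1 * f i + c2 * g i) UNIV = c1 * infsum f UNIV + c2 * infsum g UNIV"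
proof -
  have a: "(\<lambda>i. c1 * f i) summable_on UNIV" by (rule summable_on_cmult_right[OF assms(1)])
  have b: "(\<lambda>i. c2 * g i) summable_on UNIV" by (rule summable_on_cmult_right[OF assms(2)])
  show "(\<lambda>i. c1 * f i + c2 * g i) summable_on UNIV" by (rule summable_on_add[OF a b])
  have "infsum (\<lambda>i. c1 * f i + c2 * g i) UNIV = infsum (\<lambda>i. c1 * f i) UNIV + infsum (\<lambda>i. c2 * g i) UNIV"
    by (rule infsum_add[OF a b])
  also have "\<dots> = c1 * infsum f UNIV + c2 * infsum g UNIV"
    using assms by (simp add: infsum_cmult_right)
  finally show "infsum (\<lambda>i. c1 * f i + c2 * g i) UNIV = c1 * infsum f UNIV + c2 * infsum g UNIV" .
qed

lemma cs_aux:
  assumes "x \<in> l2" "y \<in> l2" "a > 0"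
  shows "cmod (l2_inner x y) \<le> (a / 2) * (l2_norm x)^2 + (1 / (2 * a)) * (l2_norm y)^2"
proof -
  have sx: "(\<lambda>i. (cmod (x i))^2) summable_on UNIV" and sy: "(\<lambda>i. (cmod (y i))^2) summable_on UNIV"
    using assms by (simp_all add: l2_def)
  have "cmod (l2_inner x y) \<le> infsum (\<lambda>i. norm (cnj (x i) * y i)) UNIV"
    unfolding l2_inner_def by (rule norm_infsum_bound, rule inner_abs_summ[OF assms(1,2)])
  also have "\<dots> \<le> infsum (\<lambda>i. (a / 2) * (cmod (x i))^2 + (1 / (2 * a)) * (cmod (y i))^2) UNIV"
  proof (rule infsum_mono)
    show "(\<lambda>i. norm (cnj (x i) * y i)) summable_on UNIV"
      by (rule inner_abs_summ[OF assms(1,2)])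
    show "(\<lambda>i. (a / 2) * (cmod (x i))^2 + (1 / (2 * a)) * (cmod (y i))^2) summable_on UNIV"
      by (rule summ2(1)[OF sx sy])
    fix i
    have ne: "a \<noteq> 0" using assms(3) by simp
    have eq: "(a / 2) * (cmod (x i))^2 + (1 / (2 * a)) * (cmod (y i))^2 - cmod (x i) * cmod (y i)
              = (a * cmod (x i) - cmod (y i))^2 / (2 * a)"
      using ne by (simp add: field_simps power2_eq_square)
    have "0 \<le> (a * cmod (x i) - cmod (y i))^2 / (2 * a)" using assms(3) by simp
    hence "cmod (x i) * cmod (y i) \<le> (a / 2) * (cmod (x i))^2 + (1 / (2 * a)) * (cmod (y i))^2"
      using eq by linarith
    thus "norm (cnj (x i) * y i) \<le> (a / 2) * (cmod (x i))^2 + (1 / (2 * a)) * (cmod (y i))^2"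
      by (simp add: norm_mult)
  qed
  also have "\<dots> = (a / 2) * (l2_norm x)^2 + (1 / (2 * a)) * (l2_norm y)^2"
    unfolding summ2(2)[OF sx sy] l2_norm_sq by (rule refl)
  finally show ?thesis .
qed

lemma cauchy_schwarz:
  assumes "x \<in> l2" "y \<in> l2"
  shows "cmod (l2_inner x y) \<le> l2_norm x * l2_norm y"
proof (cases "l2_norm x = 0 \<or> l2_norm y = 0")
  case True
  then show ?thesis
  proof
    assume "l2_norm x = 0"
    hence "x = (\<lambda>i. 0)" by (rule l2_norm_zero[OF assms(1)])
    thus ?thesis by simp
  next
    assume "l2_norm y = 0"
    hence "y = (\<lambda>i. 0)" by (rule l2_norm_zero[OF assms(2)])
    thus ?thesis by simp
  qed
next
  case False
  hence nx: "l2_norm x > 0" and ny: "l2_norm y > 0" using l2_norm_nonneg[of x] l2_norm_nonneg[of y] by auto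
  have "cmod (l2_inner x y) \<le> ((l2_norm y / l2_norm x) / 2) * (l2_norm x)^2 + (1 / (2 * (l2_norm y / l2_norm x))) * (l2_norm y)^2"
    by (rule cs_aux[OF assms]) (use nx ny in simp)
  also have "\<dots> = l2_norm x * l2_norm y"
  proof -
    have e1: "((l2_norm y / l2_norm x) / 2) * (l2_norm x)^2 = l2_norm x * l2_norm y / 2"
      using nx by (simp add: power2_eq_square)
    have e2: "(1 / (2 * (l2_norm y / l2_norm x))) * (l2_norm y)^2 = l2_norm x * l2_norm y / 2"
      using nx ny by (simp add: power2_eq_square)
    show ?thesis unfolding e1 e2 by simp
  qed
  finally show ?thesis .
qed

lemma l2_norm_scale:
  assumes "x \<in> l2"
  shows "l2_norm (\<lambda>i. c * x i) = cmod c * l2_norm x"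
proof -
  have "infsum (\<lambda>i. (cmod (c * x i))^2) UNIV = (cmod c)^2 * infsum (\<lambda>i. (cmod (x i))^2) UNIV"
    using infsum_cmult_right[of "(cmod c)^2" "\<lambda>i. (cmod (x i))^2" UNIV] norm_sq_summ[OF assms]
    by (simp add: norm_mult power_mult_distrib)
  thus ?thesis unfolding l2_norm_def by (simp add: real_sqrt_mult)
qed

lemma l2_scale: "x \<in> l2 \<Longrightarrow> (\<lambda>i. c * x i) \<in> l2"
  using l2_comb[of "\<lambda>i. 0" x c] by simp

lemma nsq_comb:
  assumes "x \<in> l2" "y \<in> l2"
  shows "(l2_norm (\<lambda>i. x i + c * y i))^2 = (l2_norm x)^2 + 2 * Re (c * l2_inner x y) + (cmod c)^2 * (l2_norm y)^2"
proof -
  have z: "(\<lambda>i. x i + c * y i) \<in> l2" using l2_comb assms by blast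
  have "complex_of_real ((l2_norm (\<lambda>i. x i + c * y i))^2) = l2_inner (\<lambda>i. x i + c * y i) (\<lambda>i. x i + c * y i)"
    using inner_self[OF z] by simp
  also have "\<dots> = l2_inner x x + c * l2_inner x y + cnj c * (l2_inner y x + c * l2_inner y y)"
    using assms z by (simp add: inner_lin_left inner_lin_right)
  also have "\<dots> = complex_of_real ((l2_norm x)^2) + (c * l2_inner x y + cnj (c * l2_inner x y)) + complex_of_real ((cmod c)^2 * (l2_norm y)^2)"
  proof -
    have cc: "cnj c * c = complex_of_real ((cmod c)^2)" using complex_norm_square[of c] by (simp only: mult.commute)
    show ?thesis
    using assms cc by (simp add: inner_self inner_conj[of y x] algebra_simps)
  qed
  also have "\<dots> = complex_of_real ((l2_norm x)^2 + 2 * Re (c * l2_inner x y) + (cmod c)^2 * (l2_norm y)^2)"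
    unfolding complex_add_cnj of_real_add by (rule refl)
  finally show ?thesis by (rule of_real_eq_iff[THEN iffD1])
qed

lemma l2_norm_triangle:
  assumes "x \<in> l2" "y \<in> l2"
  shows "l2_norm (\<lambda>i. x i + c * y i) \<le> l2_norm x + cmod c * l2_norm y"
proof -
  have "Re (c * l2_inner x y) \<le> cmod (c * l2_inner x y)" by (rule complex_Re_le_cmod)
  also have "\<dots> = cmod c * cmod (l2_inner x y)" by (rule norm_mult)
  also have "\<dots> \<le> cmod c * (l2_norm x * l2_norm y)"
    by (rule mult_left_mono[OF cauchy_schwarz[OF assms] norm_ge_zero])
  finally have h1: "Re (c * l2_inner x y) \<le> cmod c * (l2_norm x * l2_norm y)" .
  have h2: "(l2_norm x + cmod c * l2_norm y)^2 = (l2_norm x)^2 + 2 * (cmod c * (l2_norm x * l2_norm y)) + (cmod c)^2 * (l2_norm y)^2"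
    by (simp only: power2_sum power_mult_distrib mult.assoc mult.left_commute)
  have "(l2_norm (\<lambda>i. x i + c * y i))^2 \<le> (l2_norm x + cmod c * l2_norm y)^2"
    unfolding h2 nsq_comb[OF assms, of c] using h1 by linarith
  moreover have "0 \<le> l2_norm x + cmod c * l2_norm y"
    using l2_norm_nonneg[of x] l2_norm_nonneg[of y] by simp
  ultimately show ?thesis by (rule power2_le_imp_le)
qed



lemma bops_l2: "T \<in> bops \<Longrightarrow> x \<in> l2 \<Longrightarrow> T x \<in> l2"
  by (simp add: bops_def)

lemma bops_lin: "T \<in> bops \<Longrightarrow> x \<in> l2 \<Longrightarrow> y \<in> l2 \<Longrightarrow> T (\<lambda>i. x i + c * y i) = (\<lambda>i. T x i + c * T y i)"
  by (simp add: bops_def)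

lemma bops_out: "T \<in> bops \<Longrightarrow> x \<notin> l2 \<Longrightarrow> T x = (\<lambda>i. 0)"
  by (simp add: bops_def)

lemma bops_bound:
  fixes T :: "('i \<Rightarrow> complex) \<Rightarrow> 'i \<Rightarrow> complex"
  shows "T \<in> bops \<Longrightarrow> \<exists>K\<ge>0. \<forall>x\<in>l2. l2_norm (T x) \<le> K * l2_norm x"
proof -
  assume "T \<in> bops"
  then obtain K where K: "\<forall>x\<in>l2. l2_norm (T x) \<le> K * l2_norm x" by (auto simp: bops_def)
  have "\<forall>x\<in>l2. l2_norm (T x) \<le> max K 0 * l2_norm x"
  proof
    fix x :: "'i \<Rightarrow> complex" assume "x \<in> l2"
    hence "l2_norm (T x) \<le> K * l2_norm x" using K by blast
    also have "\<dots> \<le> max K 0 * l2_norm x" by (rule mult_right_mono) (auto simp: l2_norm_nonneg)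
    finally show "l2_norm (T x) \<le> max K 0 * l2_norm x" .
  qed
  thus ?thesis by (intro exI[of _ "max K 0"]) simp
qed

lemma bops_zero: assumes "T \<in> bops" shows "T (\<lambda>i. 0) = (\<lambda>i. 0)"
proof -
  have "T (\<lambda>i. 0 + 1 * 0) = (\<lambda>i. T (\<lambda>i. 0) i + 1 * T (\<lambda>i. 0) i)"
    by (rule bops_lin[OF assms]) simp_all
  hence "T (\<lambda>i. 0) = (\<lambda>i. T (\<lambda>i. 0) i + T (\<lambda>i. 0) i)" by simp
  hence "\<And>i. T (\<lambda>i. 0) i = T (\<lambda>i. 0) i + T (\<lambda>i. 0) i" by (metis)
  thus ?thesis by (intro ext) (metis add_cancel_left_right)
qed

lemma bops_scale: assumes "T \<in> bops" "x \<in> l2" shows "T (\<lambda>i. c * x i) = (\<lambda>i. c * T x i)"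
  using bops_lin[OF assms(1) l2_zero assms(2), of c] bops_zero[OF assms(1)] by simp

lemma bops_add: assumes "T \<in> bops" "x \<in> l2" "y \<in> l2" shows "T (\<lambda>i. x i + y i) = (\<lambda>i. T x i + T y i)"
  using bops_lin[OF assms, of 1] by simp

lemma bops_diff: assumes "T \<in> bops" "x \<in> l2" "y \<in> l2" shows "T (\<lambda>i. x i - y i) = (\<lambda>i. T x i - T y i)"
  using bops_lin[OF assms, of "-1"] by simp

lemma l2_add: "x \<in> l2 \<Longrightarrow> y \<in> l2 \<Longrightarrow> (\<lambda>i. x i + y i) \<in> l2"
  using l2_comb[of x y 1] by simp

lemma l2_diff: "x \<in> l2 \<Longrightarrow> y \<in> l2 \<Longrightarrow> (\<lambda>i. x i - y i) \<in> l2"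
  using l2_comb[of x y "-1"] by simp

lemma inner_diff_left:
  assumes "x \<in> l2" "y \<in> l2" "z \<in> l2"
  shows "l2_inner (\<lambda>i. y i - z i) x = l2_inner y x - l2_inner z x"
  using inner_lin_left[OF assms, of "-1"] by simp

lemma inner_diff_right:
  assumes "x \<in> l2" "y \<in> l2" "z \<in> l2"
  shows "l2_inner x (\<lambda>i. y i - z i) = l2_inner x y - l2_inner x z"
  using inner_lin_right[OF assms, of "-1"] by simp

lemma inner_scale_right:
  assumes "x \<in> l2" "y \<in> l2"
  shows "l2_inner x (\<lambda>i. c * y i) = c * l2_inner x y"
  using inner_lin_right[OF assms(1) l2_zero assms(2), of c] by simp

lemma finsupp_infsum:
  fixes f :: "'a \<Rightarrow> 'b::{comm_monoid_add,t2_space}"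
  assumes "finite F" "\<And>i. i \<notin> F \<Longrightarrow> f i = 0"
  shows "infsum f UNIV = sum f F" and "f summable_on UNIV"
proof -
  have "infsum f F = infsum f UNIV"
    by (rule infsum_cong_neutral) (use assms(2) in auto)
  thus "infsum f UNIV = sum f F" using assms(1) by simp
  have "f summable_on F" using assms(1) by simp
  moreover have "f summable_on F \<longleftrightarrow> f summable_on UNIV"
    by (rule summable_on_cong_neutral) (use assms(2) in auto)
  ultimately show "f summable_on UNIV" by simp
qed

lemma finsupp_l2:
  assumes "finite F" "\<And>i. i \<notin> F \<Longrightarrow> x i = 0"
  shows "x \<in> l2"
  unfolding l2_def using finsupp_infsum(2)[OF assms(1), of "\<lambda>i. (cmod (x i))^2"] assms(2) by simp

definition delta :: "'i \<Rightarrow> 'i \<Rightarrow> complex" where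
  "delta j = (\<lambda>i. if i = j then 1 else 0)"

definition restr :: "'i set \<Rightarrow> ('i \<Rightarrow> complex) \<Rightarrow> 'i \<Rightarrow> complex" where
  "restr F x = (\<lambda>i. if i \<in> F then x i else 0)"

lemma delta_l2: "delta j \<in> l2"
  by (rule finsupp_l2[of "{j}"]) (auto simp: delta_def)

lemma restr_l2: "finite F \<Longrightarrow> restr F x \<in> l2"
  by (rule finsupp_l2[of F]) (auto simp: restr_def)

lemma restr_insert:
  assumes "a \<notin> F"
  shows "restr (insert a F) x = (\<lambda>i. restr F x i + x a * delta a i)"
  using assms by (auto simp: restr_def delta_def)

lemma restr_empty: "restr {} x = (\<lambda>i. 0)"
  by (simp add: restr_def)

lemma T_restr:
  assumes "T \<in> bops" "finite F"
  shows "T (restr F x) = (\<lambda>i. \<Sum>j\<in>F. x j * T (delta j) i)"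
  using assms(2)
proof (induction F rule: finite_induct)
  case empty
  then show ?case by (simp add: restr_empty bops_zero[OF assms(1)])
next
  case (insert a F)
  have "T (restr (insert a F) x) = T (\<lambda>i. restr F x i + x a * delta a i)"
    using insert.hyps by (simp add: restr_insert)
  also have "\<dots> = (\<lambda>i. T (restr F x) i + x a * T (delta a) i)"
    by (rule bops_lin[OF assms(1) restr_l2[OF insert.hyps(1)] delta_l2])
  also have "\<dots> = (\<lambda>i. \<Sum>j\<in>insert a F. x j * T (delta j) i)"
    using insert by (simp add: add.commute)
  finally show ?case .
qed

lemma inner_finsum_left:
  assumes "finite F" "\<And>j. j \<in> F \<Longrightarrow> g j \<in> l2" "y \<in> l2"
  shows "(\<lambda>i. \<Sum>j\<in>F. c j * g j i) \<in> l2 \<and>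
         l2_inner (\<lambda>i. \<Sum>j\<in>F. c j * g j i) y = (\<Sum>j\<in>F. cnj (c j) * l2_inner (g j) y)"
  using assms(1,2)
proof (induction F rule: finite_induct)
  case empty
  then show ?case by simp
next
  case (insert a F)
  have IH: "(\<lambda>i. \<Sum>j\<in>F. c j * g j i) \<in> l2"
           "l2_inner (\<lambda>i. \<Sum>j\<in>F. c j * g j i) y = (\<Sum>j\<in>F. cnj (c j) * l2_inner (g j) y)"
    using insert by auto
  have ga: "g a \<in> l2" using insert by auto
  have eq: "(\<lambda>i. \<Sum>j\<in>insert a F. c j * g j i) = (\<lambda>i. (\<Sum>j\<in>F. c j * g j i) + c a * g a i)"
    using insert.hyps by (simp add: add.commute)
  show ?case
    unfolding eq
    using l2_comb[OF IH(1) ga, of "c a"] inner_lin_left[OF assms(3) IH(1) ga, of "c a"] IH(2) insert.hyps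
    by (simp add: add.commute)
qed

lemma tail_infsum:
  fixes f :: "'a \<Rightarrow> real"
  assumes "f summable_on UNIV" "finite F"
  shows "infsum (\<lambda>i. if i \<in> F then 0 else f i) UNIV = infsum f UNIV - sum f F"
proof -
  have s1: "f summable_on (-F)" by (rule summable_on_subset[OF assms(1)]) simp
  have "infsum f UNIV = infsum f (F \<union> (-F))" by simp
  also have "\<dots> = infsum f F + infsum f (-F)"
    by (rule infsum_Un_disjoint) (use assms s1 in auto)
  finally have a: "infsum f UNIV = sum f F + infsum f (-F)" using assms(2) by simp
  have "infsum (\<lambda>i. if i \<in> F then 0 else f i) (-F) = infsum (\<lambda>i. if i \<in> F then 0 else f i) UNIV"
    by (rule infsum_cong_neutral) auto
  moreover have "infsum (\<lambda>i. if i \<in> F then 0 else f i) (-F) = infsum f (-F)"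
    by (rule infsum_cong) auto
  ultimately show ?thesis using a by simp
qed



lemma coef_l2:
  fixes T :: "('i \<Rightarrow> complex) \<Rightarrow> 'i \<Rightarrow> complex"
  assumes T: "T \<in> bops" and K0: "K \<ge> 0" and K: "\<forall>x\<in>l2. l2_norm (T x) \<le> K * l2_norm x"
    and y: "y \<in> l2"
  shows "(\<lambda>j. l2_inner (T (delta j)) y) \<in> l2 \<and> l2_norm (\<lambda>j. l2_inner (T (delta j)) y) \<le> K * l2_norm y"
proof -
  define c where "c = (\<lambda>j. l2_inner (T (delta j)) y)"
  have Td: "\<And>j. T (delta j) \<in> l2" using bops_l2[OF T delta_l2] .
  have fin: "(\<Sum>j\<in>F. (cmod (c j))^2) \<le> (K * l2_norm y)^2" if F: "finite F" for F
  proof -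
    define xF where "xF = restr F c"
    define s where "s = (\<Sum>j\<in>F. (cmod (c j))^2)"
    have s0: "0 \<le> s" unfolding s_def by (simp add: sum_nonneg)
    have xF: "xF \<in> l2" unfolding xF_def by (rule restr_l2[OF F])
    have "T xF = (\<lambda>i. \<Sum>j\<in>F. c j * T (delta j) i)" unfolding xF_def by (rule T_restr[OF T F])
    hence "l2_inner (T xF) y = (\<Sum>j\<in>F. cnj (c j) * l2_inner (T (delta j)) y)"
      using inner_finsum_left[OF F _ y, of "\<lambda>j. T (delta j)" c] Td by simp
    also have "\<dots> = (\<Sum>j\<in>F. complex_of_real ((cmod (c j))^2))"
      unfolding c_def by (intro sum.cong refl) (metis complex_norm_square mult.commute)
    also have "\<dots> = complex_of_real s" unfolding s_def by simp
    finally have inn: "l2_inner (T xF) y = complex_of_real s" .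
    have "(l2_norm xF)^2 = infsum (\<lambda>i. (cmod (xF i))^2) UNIV" by (rule l2_norm_sq)
    also have "\<dots> = (\<Sum>i\<in>F. (cmod (xF i))^2)"
      by (rule finsupp_infsum(1)[OF F]) (simp add: xF_def restr_def)
    also have "\<dots> = s" unfolding s_def xF_def restr_def by simp
    finally have nx: "l2_norm xF = sqrt s" by (metis l2_norm_nonneg real_sqrt_abs abs_of_nonneg)
    have "s = cmod (l2_inner (T xF) y)" using inn s0 by simp
    also have "\<dots> \<le> l2_norm (T xF) * l2_norm y" by (rule cauchy_schwarz[OF bops_l2[OF T xF] y])
    also have "\<dots> \<le> (K * l2_norm xF) * l2_norm y"
      by (rule mult_right_mono) (use K xF l2_norm_nonneg in auto)
    finally have c1: "s \<le> (K * l2_norm xF) * l2_norm y" .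
    have c2: "s \<le> (K * l2_norm y) * sqrt s" using c1 unfolding nx by (simp add: algebra_simps)
    have c3: "sqrt s * sqrt s = s" by (simp only: real_sqrt_mult_self abs_of_nonneg[OF s0])
    have "sqrt s * sqrt s \<le> (K * l2_norm y) * sqrt s" using c2 c3 by linarith
    hence "sqrt s \<le> K * l2_norm y \<or> sqrt s = 0"
      by (metis mult_right_le_imp_le real_sqrt_ge_zero s0 order_le_less)
    hence "sqrt s \<le> K * l2_norm y"
      using K0 l2_norm_nonneg[of y] by auto
    hence "(sqrt s)^2 \<le> (K * l2_norm y)^2" by (rule power_mono) (simp add: s0)
    moreover have "(sqrt s)^2 = s" using s0 by simp
    ultimately show ?thesis unfolding s_def by simp
  qed
  have bdd: "bdd_above (sum (\<lambda>j. (cmod (c j))^2) ` {F. F \<subseteq> UNIV \<and> finite F})"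
    using fin by (intro bdd_aboveI[of _ "(K * l2_norm y)^2"]) auto
  have summ: "(\<lambda>j. (cmod (c j))^2) summable_on UNIV"
    by (rule nonneg_bdd_above_summable_on[OF _ bdd]) simp
  have "infsum (\<lambda>j. (cmod (c j))^2) UNIV \<le> (K * l2_norm y)^2"
    by (rule infsum_le_finite_sums[OF summ]) (use fin in auto)
  hence "l2_norm c \<le> sqrt ((K * l2_norm y)^2)" unfolding l2_norm_def[of c] by (rule real_sqrt_le_mono)
  also have "\<dots> = K * l2_norm y" using K0 l2_norm_nonneg[of y] by simp
  finally show ?thesis using summ unfolding c_def l2_def by simp
qed

lemma adjoint_exists:
  fixes T :: "('i \<Rightarrow> complex) \<Rightarrow> 'i \<Rightarrow> complex"
  assumes T: "T \<in> bops"
  shows "\<exists>S. is_adjoint T S"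
proof -
  obtain K where K0: "K \<ge> 0" and K: "\<forall>x\<in>l2. l2_norm (T x) \<le> K * l2_norm x"
    using bops_bound[OF T] by blast
  define c where "c y = (\<lambda>j. l2_inner (T (delta j)) y)" for y :: "'i \<Rightarrow> complex"
  define S where "S y = (if y \<in> l2 then c y else (\<lambda>i. 0))" for y
  have Td: "\<And>j. T (delta j) \<in> l2" using bops_l2[OF T delta_l2] .
  have cl2: "c y \<in> l2" and cn: "l2_norm (c y) \<le> K * l2_norm y" if "y \<in> l2" for y
    using coef_l2[OF T K0 K that] unfolding c_def by auto
  have Sb: "S \<in> bops"
    unfolding bops_def
  proof (intro CollectI conjI ballI allI impI)
    fix y :: "'i \<Rightarrow> complex" assume "y \<in> l2" thus "S y \<in> l2" using cl2 by (simp add: S_def)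
  next
    fix y1 y2 :: "'i \<Rightarrow> complex" and a assume y1: "y1 \<in> l2" and y2: "y2 \<in> l2"
    have "(\<lambda>i. y1 i + a * y2 i) \<in> l2" using l2_comb[OF y1 y2] .
    thus "S (\<lambda>i. y1 i + a * y2 i) = (\<lambda>i. S y1 i + a * S y2 i)"
      using y1 y2 by (simp add: S_def c_def inner_lin_right[OF Td])
  next
    show "\<exists>K. \<forall>y\<in>l2. l2_norm (S y) \<le> K * l2_norm y"
      using cn by (intro exI[of _ K]) (simp add: S_def)
  next
    fix y :: "'i \<Rightarrow> complex" assume "y \<notin> l2" thus "S y = (\<lambda>i. 0)" by (simp add: S_def)
  qed
  have adj: "l2_inner (T x) y = l2_inner x (S y)" if x: "x \<in> l2" and y: "y \<in> l2" for x y
  proof -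
    define A where "A F = l2_inner (T (restr F x)) y" for F
    have A_eq: "A F = (\<Sum>j\<in>F. cnj (x j) * c y j)" if F: "finite F" for F
    proof -
      have "T (restr F x) = (\<lambda>i. \<Sum>j\<in>F. x j * T (delta j) i)" by (rule T_restr[OF T F])
      thus ?thesis unfolding A_def c_def
        using inner_finsum_left[OF F _ y, of "\<lambda>j. T (delta j)" x] Td by simp
    qed
    have lim1: "(A \<longlongrightarrow> l2_inner x (S y)) (finite_subsets_at_top UNIV)"
    proof -
      have L: "((\<lambda>F. sum (\<lambda>j. cnj (x j) * c y j) F) \<longlongrightarrow> infsum (\<lambda>j. cnj (x j) * c y j) UNIV) (finite_subsets_at_top UNIV)"
        by (rule infsum_tendsto[OF inner_summ[OF x cl2[OF y]]])
      have E: "infsum (\<lambda>j. cnj (x j) * c y j) UNIV = l2_inner x (S y)"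
        using y by (simp add: S_def l2_inner_def)
      have ev: "eventually (\<lambda>F. sum (\<lambda>j. cnj (x j) * c y j) F = A F) (finite_subsets_at_top UNIV)"
        by (rule eventually_finite_subsets_at_top_weakI) (simp add: A_eq)
      have "(A \<longlongrightarrow> infsum (\<lambda>j. cnj (x j) * c y j) UNIV) (finite_subsets_at_top UNIV)"
        by (rule Lim_transform_eventually[OF L ev])
      thus ?thesis unfolding E .
    qed
    define tl where "tl F = infsum (\<lambda>i. (cmod (x i))^2) UNIV - sum (\<lambda>i. (cmod (x i))^2) F" for F
    have tl0: "(tl \<longlongrightarrow> 0) (finite_subsets_at_top UNIV)"
    proof -
      have "((\<lambda>F. sum (\<lambda>i. (cmod (x i))^2) F) \<longlongrightarrow> infsum (\<lambda>i. (cmod (x i))^2) UNIV) (finite_subsets_at_top UNIV)"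
        by (rule infsum_tendsto[OF norm_sq_summ[OF x]])
      hence "((\<lambda>F. infsum (\<lambda>i. (cmod (x i))^2) UNIV - sum (\<lambda>i. (cmod (x i))^2) F) \<longlongrightarrow>
              infsum (\<lambda>i. (cmod (x i))^2) UNIV - infsum (\<lambda>i. (cmod (x i))^2) UNIV) (finite_subsets_at_top UNIV)"
        by (intro tendsto_diff tendsto_const)
      thus ?thesis unfolding tl_def by simp
    qed
    have g0: "((\<lambda>F. K * l2_norm y * sqrt (tl F)) \<longlongrightarrow> 0) (finite_subsets_at_top UNIV)"
    proof -
      have "((\<lambda>F. K * l2_norm y * sqrt (tl F)) \<longlongrightarrow> K * l2_norm y * sqrt 0) (finite_subsets_at_top UNIV)"
        by (intro tendsto_mult tendsto_const tendsto_real_sqrt tl0)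
      thus ?thesis by simp
    qed
    have bnd: "norm (A F - l2_inner (T x) y) \<le> K * l2_norm y * sqrt (tl F)" if F: "finite F" for F
    proof -
      define d where "d = (\<lambda>i. x i - restr F x i)"
      have rl: "restr F x \<in> l2" by (rule restr_l2[OF F])
      have dl: "d \<in> l2" unfolding d_def by (rule l2_diff[OF x rl])
      have Tdl: "T d = (\<lambda>i. T x i - T (restr F x) i)" unfolding d_def by (rule bops_diff[OF T x rl])
      have "l2_inner (T x) y - A F = l2_inner (T d) y"
        unfolding A_def Tdl by (rule inner_diff_left[OF y bops_l2[OF T x] bops_l2[OF T rl], symmetric])
      hence "norm (A F - l2_inner (T x) y) = cmod (l2_inner (T d) y)" by (metis norm_minus_commute)
      also have "\<dots> \<le> l2_norm (T d) * l2_norm y" by (rule cauchy_schwarz[OF bops_l2[OF T dl] y])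
      also have "\<dots> \<le> (K * l2_norm d) * l2_norm y"
        by (rule mult_right_mono) (use K dl l2_norm_nonneg in auto)
      also have "l2_norm d = sqrt (tl F)"
      proof -
        have "(l2_norm d)^2 = infsum (\<lambda>i. (cmod (d i))^2) UNIV" by (rule l2_norm_sq)
        also have "(\<lambda>i. (cmod (d i))^2) = (\<lambda>i. if i \<in> F then 0 else (cmod (x i))^2)"
          by (auto simp: d_def restr_def)
        also have "infsum \<dots> UNIV = tl F" unfolding tl_def by (rule tail_infsum[OF norm_sq_summ[OF x] F])
        finally show ?thesis by (metis l2_norm_nonneg real_sqrt_abs abs_of_nonneg)
      qed
      finally show ?thesis by (simp add: algebra_simps)
    qed
    have lim2: "(A \<longlongrightarrow> l2_inner (T x) y) (finite_subsets_at_top UNIV)"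
    proof -
      have "((\<lambda>F. A F - l2_inner (T x) y) \<longlongrightarrow> 0) (finite_subsets_at_top UNIV)"
        by (rule Lim_null_comparison[OF _ g0]) (rule eventually_finite_subsets_at_top_weakI, rule bnd)
      thus ?thesis by (simp add: LIM_zero_iff)
    qed
    show ?thesis by (rule tendsto_unique[OF finite_subsets_at_top_neq_bot lim2 lim1])
  qed
  have "is_adjoint T S" unfolding is_adjoint_def using Sb adj by blast
  thus ?thesis by blast
qed

lemma adj_is_adjoint:
  fixes T :: "('i \<Rightarrow> complex) \<Rightarrow> 'i \<Rightarrow> complex"
  assumes "T \<in> bops"
  shows "is_adjoint T (adj T)"
  unfolding adj_def using adjoint_exists[OF assms] by (rule someI_ex)



lemma sq_le_prod_imp: fixes a b :: real
  assumes "0 \<le> a" "0 \<le> b" "a^2 \<le> a * b" shows "a \<le> b"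
proof (cases "a = 0")
  case True thus ?thesis using assms by simp
next
  case False hence "a > 0" using assms by simp
  thus ?thesis using assms(3) by (simp add: power2_eq_square)
qed

lemma funpow_l2: "T \<in> bops \<Longrightarrow> x \<in> l2 \<Longrightarrow> (T ^^ n) x \<in> l2"
  by (induction n) (auto intro: bops_l2)

lemma finsum_l2:
  assumes "finite F" "\<And>j. j \<in> F \<Longrightarrow> g j \<in> l2"
  shows "(\<lambda>i. \<Sum>j\<in>F. g j i) \<in> l2"
  using inner_finsum_left[OF assms l2_zero, where c="\<lambda>j. 1"] by simp

lemma bops_finsum:
  assumes "T \<in> bops" "finite F" "\<And>j. j \<in> F \<Longrightarrow> g j \<in> l2"
  shows "T (\<lambda>i. \<Sum>j\<in>F. g j i) = (\<lambda>i. \<Sum>j\<in>F. T (g j) i)"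
  using assms(2,3)
proof (induction F rule: finite_induct)
  case empty
  then show ?case using bops_zero[OF assms(1)] by simp
next
  case (insert a F)
  have l: "(\<lambda>i. \<Sum>j\<in>F. g j i) \<in> l2"
    by (rule finsum_l2[OF insert.hyps(1)]) (use insert.prems in auto)
  have "T (\<lambda>i. \<Sum>j\<in>insert a F. g j i) = T (\<lambda>i. (\<Sum>j\<in>F. g j i) + g a i)"
    using insert.hyps by (simp add: add.commute)
  also have "\<dots> = (\<lambda>i. T (\<lambda>i. \<Sum>j\<in>F. g j i) i + T (g a) i)"
    by (rule bops_add[OF assms(1) l]) (use insert.prems in auto)
  also have "\<dots> = (\<lambda>i. \<Sum>j\<in>insert a F. T (g j) i)"
    using insert by (simp add: add.commute)
  finally show ?case .
qed


lemma inner_finsum_l: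
  assumes "finite F" "\<And>j. j \<in> F \<Longrightarrow> g j \<in> l2" "y \<in> l2"
  shows "l2_inner (\<lambda>i. \<Sum>j\<in>F. g j i) y = (\<Sum>j\<in>F. l2_inner (g j) y)"
  using inner_finsum_left[OF assms, where c="\<lambda>j. 1"] by simp

lemma inner_finsum_r:
  assumes "finite F" "\<And>j. j \<in> F \<Longrightarrow> g j \<in> l2" "y \<in> l2"
  shows "l2_inner y (\<lambda>i. \<Sum>j\<in>F. g j i) = (\<Sum>j\<in>F. l2_inner y (g j))"
proof -
  have "l2_inner y (\<lambda>i. \<Sum>j\<in>F. g j i) = cnj (\<Sum>j\<in>F. l2_inner (g j) y)"
    using inner_conj[of "\<lambda>i. \<Sum>j\<in>F. g j i" y] inner_finsum_l[OF assms] by simp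
  also have "\<dots> = (\<Sum>j\<in>F. l2_inner y (g j))"
    by (simp add: inner_conj[of y])
  finally show ?thesis .
qed

locale isom =
  fixes V W :: "('i \<Rightarrow> complex) \<Rightarrow> 'i \<Rightarrow> complex"
  assumes Vb: "V \<in> bops" and Wb: "W \<in> bops"
    and adjVW: "\<And>x y. x \<in> l2 \<Longrightarrow> y \<in> l2 \<Longrightarrow> l2_inner (V x) y = l2_inner x (W y)"
    and WV: "\<And>x. x \<in> l2 \<Longrightarrow> W (V x) = x"
begin

lemma iso: assumes "x \<in> l2" shows "l2_norm (V x) = l2_norm x"
proof -
  have "complex_of_real ((l2_norm (V x))^2) = complex_of_real ((l2_norm x)^2)"
    using inner_self[OF bops_l2[OF Vb assms]] adjVW[OF assms bops_l2[OF Vb assms]] WV[OF assms]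
      inner_self[OF assms] by simp
  hence "(l2_norm (V x))^2 = (l2_norm x)^2" using of_real_eq_iff by blast
  thus ?thesis using l2_norm_nonneg by (metis power2_eq_iff_nonneg)
qed

lemma Wcontr: assumes "y \<in> l2" shows "l2_norm (W y) \<le> l2_norm y"
proof -
  have wy: "W y \<in> l2" by (rule bops_l2[OF Wb assms])
  have "complex_of_real ((l2_norm (W y))^2) = l2_inner (V (W y)) y"
    using inner_self[OF wy] adjVW[OF wy assms] by simp
  hence "(l2_norm (W y))^2 = cmod (l2_inner (V (W y)) y)"
    by (metis norm_of_real abs_of_nonneg zero_le_power2)
  also have "\<dots> \<le> l2_norm (V (W y)) * l2_norm y"
    by (rule cauchy_schwarz[OF bops_l2[OF Vb wy] assms])
  also have "\<dots> = l2_norm (W y) * l2_norm y" using iso[OF wy] by simp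
  finally show ?thesis by (rule sq_le_prod_imp[OF l2_norm_nonneg l2_norm_nonneg])
qed

lemma Vpow_l2: "x \<in> l2 \<Longrightarrow> (V ^^ n) x \<in> l2" by (rule funpow_l2[OF Vb])
lemma Wpow_l2: "x \<in> l2 \<Longrightarrow> (W ^^ n) x \<in> l2" by (rule funpow_l2[OF Wb])

lemma Vpow_iso: "x \<in> l2 \<Longrightarrow> l2_norm ((V ^^ n) x) = l2_norm x"
  by (induction n) (auto simp: iso Vpow_l2)

lemma adj_pow: "a \<in> l2 \<Longrightarrow> b \<in> l2 \<Longrightarrow> l2_inner ((V ^^ m) a) b = l2_inner a ((W ^^ m) b)"
proof (induction m arbitrary: b)
  case 0 then show ?case by simp
next
  case (Suc m)
  have "l2_inner ((V ^^ Suc m) a) b = l2_inner ((V ^^ m) a) (W b)"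
    using adjVW[OF Vpow_l2[OF Suc.prems(1)] Suc.prems(2)] by simp
  also have "\<dots> = l2_inner a ((W ^^ m) (W b))"
    by (rule Suc.IH[OF Suc.prems(1) bops_l2[OF Wb Suc.prems(2)]])
  also have "\<dots> = l2_inner a ((W ^^ Suc m) b)" by (simp add: funpow_Suc_right del: funpow.simps)
  finally show ?case .
qed

lemma WV_pow: "a \<in> l2 \<Longrightarrow> m \<le> k \<Longrightarrow> (W ^^ m) ((V ^^ k) a) = (V ^^ (k - m)) a"
proof (induction m arbitrary: k)
  case 0 then show ?case by simp
next
  case (Suc m)
  then obtain k' where k: "k = Suc k'" by (cases k) auto
  have "(W ^^ Suc m) ((V ^^ k) a) = (W ^^ m) (W (V ((V ^^ k') a)))"
  proof -
    have w: "(W ^^ Suc m) z = (W ^^ m) (W z)" for z by (simp add: funpow_Suc_right del: funpow.simps)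
    have v: "(V ^^ k) a = V ((V ^^ k') a)" unfolding k by simp
    show ?thesis unfolding w v ..
  qed
  also have "\<dots> = (W ^^ m) ((V ^^ k') a)" using WV[OF Vpow_l2[OF Suc.prems(1)]] by simp
  also have "\<dots> = (V ^^ (k' - m)) a" by (rule Suc.IH) (use Suc.prems k in auto)
  finally show ?case using k by simp
qed

end



context isom begin

lemma perp:
  assumes "xi \<in> l2" "W xi = (\<lambda>i. 0)" "a \<in> l2"
  shows "l2_inner xi (V a) = 0"
proof -
  have "l2_inner (V a) xi = 0" using adjVW[OF assms(3,1)] assms(2) by simp
  thus ?thesis using inner_conj[of xi "V a"] by simp
qed

lemma orth_le:
  assumes "xi \<in> l2" "W xi = (\<lambda>i. 0)" "m \<le> k"
  shows "l2_inner ((V ^^ m) xi) ((V ^^ k) xi) = (if m = k then complex_of_real ((l2_norm xi)^2) else 0)"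
proof -
  have "l2_inner ((V ^^ m) xi) ((V ^^ k) xi) = l2_inner xi ((W ^^ m) ((V ^^ k) xi))"
    by (rule adj_pow[OF assms(1) Vpow_l2[OF assms(1)]])
  also have "\<dots> = l2_inner xi ((V ^^ (k - m)) xi)" using WV_pow[OF assms(1,3)] by simp
  also have "\<dots> = (if m = k then complex_of_real ((l2_norm xi)^2) else 0)"
  proof (cases "m = k")
    case True thus ?thesis using inner_self[OF assms(1)] by simp
  next
    case False
    then obtain d where d: "k - m = Suc d" using assms(3) by (metis Suc_diff_Suc le_neq_implies_less less_imp_Suc_add add_diff_cancel_left' )
    have "l2_inner xi ((V ^^ (k - m)) xi) = l2_inner xi (V ((V ^^ d) xi))" unfolding d by simp
    also have "\<dots> = 0" by (rule perp[OF assms(1,2) Vpow_l2[OF assms(1)]])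
    finally show ?thesis using False by simp
  qed
  finally show ?thesis .
qed

lemma orth:
  assumes "xi \<in> l2" "W xi = (\<lambda>i. 0)"
  shows "l2_inner ((V ^^ m) xi) ((V ^^ k) xi) = (if m = k then complex_of_real ((l2_norm xi)^2) else 0)"
proof (cases "m \<le> k")
  case True thus ?thesis by (rule orth_le[OF assms])
next
  case False
  hence "l2_inner ((V ^^ k) xi) ((V ^^ m) xi) = 0" using orth_le[OF assms, of k m] by simp
  hence "l2_inner ((V ^^ m) xi) ((V ^^ k) xi) = 0" using inner_conj[of "(V ^^ m) xi" "(V ^^ k) xi"] by simp
  thus ?thesis using False by simp
qed

definition xs :: "('i \<Rightarrow> complex) \<Rightarrow> nat \<Rightarrow> 'i \<Rightarrow> complex" where
  "xs xi N = (\<lambda>i. \<Sum>m<N. (V ^^ m) xi i)"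

lemma xs_l2: "xi \<in> l2 \<Longrightarrow> xs xi N \<in> l2"
  unfolding xs_def by (rule finsum_l2) (auto intro: Vpow_l2)

lemma xs_norm:
  assumes "xi \<in> l2" "W xi = (\<lambda>i. 0)"
  shows "(l2_norm (xs xi N))^2 = real N * (l2_norm xi)^2"
proof -
  have X: "xs xi N \<in> l2" by (rule xs_l2[OF assms(1)])
  have eq: "(\<lambda>i. \<Sum>m<N. (V ^^ m) xi i) = xs xi N" by (simp add: xs_def)
  have "l2_inner (\<lambda>i. \<Sum>m<N. (V ^^ m) xi i) (xs xi N) = (\<Sum>m<N. l2_inner ((V ^^ m) xi) (xs xi N))"
    by (rule inner_finsum_l[OF _ _ X]) (auto intro: Vpow_l2[OF assms(1)])
  hence "l2_inner (xs xi N) (xs xi N) = (\<Sum>m<N. l2_inner ((V ^^ m) xi) (xs xi N))"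
    unfolding eq .
  also have "\<dots> = (\<Sum>m<N. \<Sum>k<N. l2_inner ((V ^^ m) xi) ((V ^^ k) xi))"
    unfolding xs_def by (intro sum.cong refl inner_finsum_r) (auto intro: Vpow_l2[OF assms(1)])
  also have "\<dots> = (\<Sum>m<N. complex_of_real ((l2_norm xi)^2))"
    by (intro sum.cong refl) (simp add: orth[OF assms])
  also have "\<dots> = complex_of_real (real N * (l2_norm xi)^2)" by simp
  finally show ?thesis using inner_self[OF X] by (metis of_real_eq_iff)
qed

lemma xs_tele:
  assumes "xi \<in> l2"
  shows "(\<lambda>i. V (xs xi N) i - xs xi N i) = (\<lambda>i. (V ^^ N) xi i - xi i)"
proof -
  have "V (xs xi N) = (\<lambda>i. \<Sum>m<N. V ((V ^^ m) xi) i)"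
    unfolding xs_def by (rule bops_finsum[OF Vb]) (auto intro: Vpow_l2[OF assms])
  also have "\<dots> = (\<lambda>i. \<Sum>m<N. (V ^^ Suc m) xi i)" by simp
  finally have "V (xs xi N) = (\<lambda>i. \<Sum>m<N. (V ^^ Suc m) xi i)" .
  hence "(\<lambda>i. V (xs xi N) i - xs xi N i) = (\<lambda>i. \<Sum>m<N. (V ^^ Suc m) xi i - (V ^^ m) xi i)"
    unfolding xs_def by (simp add: sum_subtractf)
  also have "\<dots> = (\<lambda>i. (V ^^ N) xi i - xi i)"
    by (rule ext, subst sum_lessThan_telescope) simp
  finally show ?thesis .
qed

lemma tele_norm:
  assumes "xi \<in> l2"
  shows "l2_norm (\<lambda>i. (V ^^ N) xi i - xi i) \<le> 2 * l2_norm xi"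
proof -
  have "l2_norm (\<lambda>i. (V ^^ N) xi i + (-1) * xi i) \<le> l2_norm ((V ^^ N) xi) + cmod (-1) * l2_norm xi"
    by (rule l2_norm_triangle[OF Vpow_l2[OF assms] assms])
  thus ?thesis using Vpow_iso[OF assms] by simp
qed

end



context isom begin

lemma not_star:
  assumes xi: "xi \<in> l2" and Wxi: "W xi = (\<lambda>i. 0)" and xi0: "xi \<noteq> (\<lambda>i. 0)"
    and Ub: "U \<in> bops" and U'b: "U' \<in> bops" and Pb: "P \<in> bops"
    and Padj: "is_adjoint P P" and PP: "\<And>x. P (P x) = P x"
    and UU': "\<And>x. x \<in> l2 \<Longrightarrow> U (U' x) = x"
    and dec: "\<And>x. x \<in> l2 \<Longrightarrow> (\<lambda>i. 2 * V x i) = (\<lambda>i. U x i + P x i)"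
  shows False
proof -
  have Pc: "l2_norm (P x) \<le> l2_norm x" if x: "x \<in> l2" for x
  proof -
    have px: "P x \<in> l2" by (rule bops_l2[OF Pb x])
    have "complex_of_real ((l2_norm (P x))^2) = l2_inner (P x) (P x)" using inner_self[OF px] by simp
    also have "\<dots> = l2_inner x (P (P x))" using Padj px x unfolding is_adjoint_def by blast
    also have "\<dots> = l2_inner x (P x)" by (simp add: PP)
    finally have "(l2_norm (P x))^2 = cmod (l2_inner x (P x))"
      by (metis norm_of_real abs_of_nonneg zero_le_power2)
    also have "\<dots> \<le> l2_norm x * l2_norm (P x)" by (rule cauchy_schwarz[OF x px])
    finally have "(l2_norm (P x))^2 \<le> l2_norm (P x) * l2_norm x" by (simp add: mult.commute)
    thus ?thesis by (rule sq_le_prod_imp[OF l2_norm_nonneg l2_norm_nonneg])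
  qed
  define x' where "x' = U' xi"
  have x': "x' \<in> l2" unfolding x'_def by (rule bops_l2[OF U'b xi])
  have Ux: "U x' = xi" unfolding x'_def by (rule UU'[OF xi])
  have vx: "V x' \<in> l2" by (rule bops_l2[OF Vb x'])
  have px: "P x' \<in> l2" by (rule bops_l2[OF Pb x'])
  have v2: "(\<lambda>i. 2 * V x' i) \<in> l2" by (rule l2_scale[OF vx])
  have xi_eq: "xi = (\<lambda>i. 2 * V x' i - P x' i)"
  proof
    fix i
    have "2 * V x' i = U x' i + P x' i" using fun_cong[OF dec[OF x'], of i] by simp
    thus "xi i = 2 * V x' i - P x' i" using Ux by (simp add: algebra_simps)
  qed
  have "W xi = (\<lambda>i. W (\<lambda>i. 2 * V x' i) i - W (P x') i)"
    unfolding xi_eq by (rule bops_diff[OF Wb v2 px])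
  also have "W (\<lambda>i. 2 * V x' i) = (\<lambda>i. 2 * W (V x') i)" by (rule bops_scale[OF Wb vx])
  also have "W (V x') = x'" by (rule WV[OF x'])
  finally have "(\<lambda>i. 2 * x' i - W (P x') i) = (\<lambda>i. 0)" using Wxi by simp
  hence WPx: "W (P x') = (\<lambda>i. 2 * x' i)" by (metis (no_types, lifting) eq_iff_diff_eq_0)
  have "2 * l2_norm x' = l2_norm (W (P x'))" unfolding WPx using l2_norm_scale[OF x', of 2] by simp
  also have "\<dots> \<le> l2_norm (P x')" by (rule Wcontr[OF px])
  also have "\<dots> \<le> l2_norm x'" by (rule Pc[OF x'])
  finally have "l2_norm x' = 0" using l2_norm_nonneg[of x'] by linarith
  hence "x' = (\<lambda>i. 0)" by (rule l2_norm_zero[OF x'])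
  hence "xi = (\<lambda>i. 0)" using Ux bops_zero[OF Ub] by simp
  thus False using xi0 by contradiction
qed

end



context isom begin

lemma not_strong:
  assumes xi: "xi \<in> l2" and Wxi: "W xi = (\<lambda>i. 0)" and xi0: "xi \<noteq> (\<lambda>i. 0)"
    and Ub: "U \<in> bops" and U'b: "U' \<in> bops" and eb: "e \<in> bops"
    and UU': "\<And>x. x \<in> l2 \<Longrightarrow> U (U' x) = x"
    and U'U: "\<And>x. x \<in> l2 \<Longrightarrow> U' (U x) = x"
    and ee: "\<And>x. e (e x) = e x"
    and eV: "\<And>x. e (V x) = V (e x)"
    and dec: "\<And>x. x \<in> l2 \<Longrightarrow> V x = (\<lambda>i. U x i + e x i)"
  shows False
proof -
  obtain K1 where K10: "K1 \<ge> 0" and K1: "\<forall>x\<in>l2. l2_norm (U' x) \<le> K1 * l2_norm x"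
    using bops_bound[OF U'b] by blast
  obtain K2 where K20: "K2 \<ge> 0" and K2: "\<forall>x\<in>l2. l2_norm (e x) \<le> K2 * l2_norm x"
    using bops_bound[OF eb] by blast
  have el: "\<And>x. x \<in> l2 \<Longrightarrow> e x \<in> l2" by (rule bops_l2[OF eb])
  have Ul: "\<And>x. x \<in> l2 \<Longrightarrow> U x \<in> l2" by (rule bops_l2[OF Ub])
  have U'l: "\<And>x. x \<in> l2 \<Longrightarrow> U' x \<in> l2" by (rule bops_l2[OF U'b])
  have Vl: "\<And>x. x \<in> l2 \<Longrightarrow> V x \<in> l2" by (rule bops_l2[OF Vb])
  have Ux: "U x = (\<lambda>i. V x i - e x i)" if x: "x \<in> l2" for x
    using dec[OF x] by (simp add: fun_eq_iff)
  have eU: "e (U x) = U (e x)" if x: "x \<in> l2" for x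
  proof -
    have "e (U x) = (\<lambda>i. e (V x) i - e (e x) i)" unfolding Ux[OF x] by (rule bops_diff[OF eb Vl[OF x] el[OF x]])
    also have "\<dots> = (\<lambda>i. V (e x) i - e (e x) i)" by (simp add: eV)
    also have "\<dots> = U (e x)" using Ux[OF el[OF x]] by simp
    finally show ?thesis .
  qed
  have eU': "e (U' x) = U' (e x)" if x: "x \<in> l2" for x
  proof -
    have "e (U' x) = U' (U (e (U' x)))" using U'U[OF el[OF U'l[OF x]]] by simp
    also have "\<dots> = U' (e (U (U' x)))" using eU[OF U'l[OF x]] by simp
    also have "\<dots> = U' (e x)" using UU'[OF x] by simp
    finally show ?thesis .
  qed
  define fx where "fx x = (\<lambda>i. x i - e x i)" for x
  have fxl: "fx x \<in> l2" if "x \<in> l2" for x unfolding fx_def by (rule l2_diff[OF that el[OF that]])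
  have efx: "e (fx x) = (\<lambda>i. 0)" if x: "x \<in> l2" for x
    unfolding fx_def using bops_diff[OF eb x el[OF x]] by (simp add: ee)
  define g where "g x = U' (fx x)" for x
  have gl: "g x \<in> l2" if "x \<in> l2" for x unfolding g_def by (rule U'l[OF fxl[OF that]])
  have eg: "e (g x) = (\<lambda>i. 0)" if x: "x \<in> l2" for x
    unfolding g_def using eU'[OF fxl[OF x]] efx[OF x] bops_zero[OF U'b] by simp
  have Vg: "V (g x) = fx x" if x: "x \<in> l2" for x
    using dec[OF gl[OF x]] eg[OF x] UU'[OF fxl[OF x]] unfolding g_def by simp
  have fg: "fx (g x) = g x" if x: "x \<in> l2" for x
    unfolding fx_def using eg[OF x] by simp
  have key3: "\<And>x. x \<in> l2 \<Longrightarrow> l2_inner xi ((W ^^ n) (fx x)) = 0" for n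
  proof (induction n)
    case 0
    then show ?case using perp[OF xi Wxi gl[OF 0]] Vg[OF 0] by simp
  next
    case (Suc n)
    have "(W ^^ Suc n) (fx x) = (W ^^ n) (W (fx x))" by (simp add: funpow_Suc_right del: funpow.simps)
    also have "W (fx x) = fx (g x)" using Vg[OF Suc.prems] WV[OF gl[OF Suc.prems]] fg[OF Suc.prems] by metis
    finally show ?case using Suc.IH[OF gl[OF Suc.prems]] by simp
  qed
  have key2: "l2_norm (e w) \<le> K1 * K2 * l2_norm (\<lambda>i. V w i - w i)" if w: "w \<in> l2" for w
  proof -
    have d: "(\<lambda>i. V w i - w i) \<in> l2" by (rule l2_diff[OF Vl[OF w] w])
    have "e (\<lambda>i. V w i - w i) = (\<lambda>i. e (V w) i - e w i)" by (rule bops_diff[OF eb Vl[OF w] w])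
    also have "\<dots> = (\<lambda>i. V (e w) i - e (e w) i)" by (simp add: eV ee)
    also have "\<dots> = U (e w)" using Ux[OF el[OF w]] by simp
    finally have "U' (e (\<lambda>i. V w i - w i)) = e w" using U'U[OF el[OF w]] by simp
    hence "l2_norm (e w) = l2_norm (U' (e (\<lambda>i. V w i - w i)))" by simp
    also have "\<dots> \<le> K1 * l2_norm (e (\<lambda>i. V w i - w i))" using K1 el[OF d] by blast
    also have "\<dots> \<le> K1 * (K2 * l2_norm (\<lambda>i. V w i - w i))"
      by (rule mult_left_mono) (use K2 d K10 in auto)
    finally show ?thesis by (simp add: mult.assoc)
  qed
  define C where "C = K1 * K2"
  have C0: "C \<ge> 0" unfolding C_def using K10 K20 by simp
  have bound: "real N * (l2_norm xi)^2 \<le> (2 * C * l2_norm xi)^2" for N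
  proof -
    define X where "X = xs xi N"
    have X: "X \<in> l2" unfolding X_def by (rule xs_l2[OF xi])
    have "l2_inner X (fx X) = (\<Sum>m<N. l2_inner ((V ^^ m) xi) (fx X))"
      unfolding X_def xs_def by (rule inner_finsum_l[OF _ _ fxl[OF xs_l2[OF xi]], unfolded xs_def]) (auto intro: Vpow_l2[OF xi])
    also have "\<dots> = (\<Sum>m<N. l2_inner xi ((W ^^ m) (fx X)))"
      by (intro sum.cong refl adj_pow[OF xi fxl[OF X]])
    also have "\<dots> = 0" using key3[OF X] by simp
    finally have i0: "l2_inner X (fx X) = 0" .
    have "X = (\<lambda>i. e X i + 1 * fx X i)" unfolding fx_def by simp
    hence "l2_inner X X = l2_inner X (e X) + 1 * l2_inner X (fx X)"
      using inner_lin_right[OF X el[OF X] fxl[OF X], of 1] by metis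
    hence "l2_inner X X = l2_inner X (e X)" using i0 by simp
    hence "(l2_norm X)^2 = cmod (l2_inner X (e X))"
      using inner_self[OF X] by (metis norm_of_real abs_of_nonneg zero_le_power2)
    also have "\<dots> \<le> l2_norm X * l2_norm (e X)" by (rule cauchy_schwarz[OF X el[OF X]])
    also have "\<dots> \<le> l2_norm X * (C * l2_norm (\<lambda>i. V X i - X i))"
      by (rule mult_left_mono) (use key2[OF X] l2_norm_nonneg C_def in auto)
    also have "(\<lambda>i. V X i - X i) = (\<lambda>i. (V ^^ N) xi i - xi i)" unfolding X_def by (rule xs_tele[OF xi])
    also have "l2_norm X * (C * l2_norm (\<lambda>i. (V ^^ N) xi i - xi i)) \<le> l2_norm X * (C * (2 * l2_norm xi))"
      by (intro mult_left_mono tele_norm[OF xi] C0 l2_norm_nonneg)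
    finally have sq: "(l2_norm X)^2 \<le> l2_norm X * (2 * C * l2_norm xi)" by (simp add: algebra_simps)
    have b0: "0 \<le> 2 * C * l2_norm xi" using C0 l2_norm_nonneg[of xi] by simp
    have "l2_norm X \<le> 2 * C * l2_norm xi"
      by (rule sq_le_prod_imp[OF l2_norm_nonneg b0 sq])
    hence "(l2_norm X)^2 \<le> (2 * C * l2_norm xi)^2" by (rule power_mono[OF _ l2_norm_nonneg])
    thus ?thesis using xs_norm[OF xi Wxi, of N] unfolding X_def by simp
  qed
  have np: "l2_norm xi > 0"
    using l2_norm_nonneg[of xi] l2_norm_zero[OF xi] xi0 by force
  define N where "N = nat (ceiling (4 * C^2)) + 1"
  have "real N > 4 * C^2" unfolding N_def by linarith
  hence "real N * (l2_norm xi)^2 > 4 * C^2 * (l2_norm xi)^2" using np by simp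
  moreover have "(2 * C * l2_norm xi)^2 = 4 * C^2 * (l2_norm xi)^2" by (simp add: power_mult_distrib)
  ultimately show False using bound[of N] by linarith
qed

end



theorem lemma2p1:
  fixes M :: "(('i \<Rightarrow> complex) \<Rightarrow> ('i \<Rightarrow> complex)) set"
  assumes "von_neumann_algebra M"
    and "properly_infinite M"
  shows "\<not> star_clean M \<and> \<not> strongly_clean M"
proof -
  have Mb: "M \<subseteq> bops" using assms(1) unfolding von_neumann_algebra_def by blast
  have Msc: "\<And>c T. T \<in> M \<Longrightarrow> bscale c T \<in> M" using assms(1) unfolding von_neumann_algebra_def by blast
  have Madj: "\<And>T. T \<in> M \<Longrightarrow> adj T \<in> M" using assms(1) unfolding von_neumann_algebra_def by blast
  obtain Q where Qp: "is_proj M Q" and Qne: "Q \<noteq> bid" and mvn: "mvn_equiv M bid Q"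
    using assms(2) unfolding properly_infinite_def infinite_proj_def by blast
  obtain V where VM: "V \<in> M" and WV0: "adj V \<circ> V = bid" and VW0: "V \<circ> adj V = Q"
    using mvn unfolding mvn_equiv_def by blast
  define W where "W = adj V"
  have Vb: "V \<in> bops" using VM Mb by blast
  have adjV: "is_adjoint V W" unfolding W_def by (rule adj_is_adjoint[OF Vb])
  have Wb: "W \<in> bops" using adjV unfolding is_adjoint_def by blast
  have Qb: "Q \<in> bops" using Qp Mb unfolding is_proj_def by blast
  interpret isom V W
  proof
    show "V \<in> bops" by (rule Vb)
    show "W \<in> bops" by (rule Wb)
    show "\<And>x y. x \<in> l2 \<Longrightarrow> y \<in> l2 \<Longrightarrow> l2_inner (V x) y = l2_inner x (W y)"
      using adjV unfolding is_adjoint_def by blast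
    show "\<And>x. x \<in> l2 \<Longrightarrow> W (V x) = x"
      using fun_cong[OF WV0] unfolding W_def bid_def by (metis comp_apply)
  qed
  obtain u where u: "Q u \<noteq> bid u" using Qne by blast
  have ul: "u \<in> l2"
  proof (rule ccontr)
    assume "u \<notin> l2"
    hence "Q u = (\<lambda>i. 0)" "bid u = (\<lambda>i. 0)" using bops_out[OF Qb] by (auto simp: bid_def)
    thus False using u by simp
  qed
  have Qu: "Q u = V (W u)" using fun_cong[OF VW0, of u] unfolding W_def by simp
  define xi where "xi = (\<lambda>i. u i - V (W u) i)"
  have VWu: "V (W u) \<in> l2" by (rule bops_l2[OF Vb bops_l2[OF Wb ul]])
  have xi: "xi \<in> l2" unfolding xi_def by (rule l2_diff[OF ul VWu])
  have xi0: "xi \<noteq> (\<lambda>i. 0)"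
  proof
    assume "xi = (\<lambda>i. 0)"
    hence "u = V (W u)" unfolding xi_def by (metis (no_types, lifting) eq_iff_diff_eq_0 ext)
    thus False using u Qu ul by (simp add: bid_def)
  qed
  have Wxi: "W xi = (\<lambda>i. 0)"
    unfolding xi_def using bops_diff[OF Wb ul VWu] WV[OF bops_l2[OF Wb ul]] by simp
  have nsc: "\<not> star_clean M"
  proof
    assume "star_clean M"
    moreover have "bscale 2 V \<in> M" by (rule Msc[OF VM])
    ultimately obtain U P where Ui: "invertible_in M U" and Pp: "is_proj M P" and dec0: "bscale 2 V = badd U P"
      unfolding star_clean_def by blast
    obtain U' where UM: "U \<in> M" and U'M: "U' \<in> M" and UU'0: "U \<circ> U' = bid"
      using Ui unfolding invertible_in_def by blast
    have PM: "P \<in> M" and PP0: "P \<circ> P = P" and adjP: "adj P = P" using Pp unfolding is_proj_def by auto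
    have Pb: "P \<in> bops" using PM Mb by blast
    have Padj: "is_adjoint P P" using adj_is_adjoint[OF Pb] adjP by simp
    show False
    proof (rule not_star[OF xi Wxi xi0 _ _ Pb Padj])
      show "U \<in> bops" using UM Mb by blast
      show "U' \<in> bops" using U'M Mb by blast
      show "\<And>x. P (P x) = P x" using PP0 by (metis comp_apply)
      show "\<And>x. x \<in> l2 \<Longrightarrow> U (U' x) = x" using UU'0 unfolding bid_def by (metis comp_apply)
      show "\<And>x. x \<in> l2 \<Longrightarrow> (\<lambda>i. 2 * V x i) = (\<lambda>i. U x i + P x i)"
        using dec0 unfolding bscale_def badd_def by metis
    qed
  qed
  have nstr: "\<not> strongly_clean M"
  proof
    assume "strongly_clean M"
    then obtain U P where Ui: "invertible_in M U" and PM: "P \<in> M" and PP0: "P \<circ> P = P"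
      and PV: "P \<circ> V = V \<circ> P" and dec0: "V = badd U P"
      unfolding strongly_clean_def using VM by blast
    obtain U' where UM: "U \<in> M" and U'M: "U' \<in> M" and UU'0: "U \<circ> U' = bid" and U'U0: "U' \<circ> U = bid"
      using Ui unfolding invertible_in_def by blast
    have Pb: "P \<in> bops" using PM Mb by blast
    show False
    proof (rule not_strong[OF xi Wxi xi0 _ _ Pb])
      show "U \<in> bops" using UM Mb by blast
      show "U' \<in> bops" using U'M Mb by blast
      show "\<And>x. P (P x) = P x" using PP0 by (metis comp_apply)
      show "\<And>x. P (V x) = V (P x)" using PV by (metis comp_apply)
      show "\<And>x. x \<in> l2 \<Longrightarrow> U (U' x) = x" using UU'0 unfolding bid_def by (metis comp_apply)
      show "\<And>x. x \<in> l2 \<Longrightarrow> U' (U x) = x" using U'U0 unfolding bid_def by (metis comp_apply)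
      show "\<And>x. x \<in> l2 \<Longrightarrow> V x = (\<lambda>i. U x i + P x i)"
        using dec0 unfolding badd_def by metis
    qed
  qed
  show ?thesis using nsc nstr by blast
qed


end
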